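(* Let $\mathbf A\in\mathbb R^{m\times n}$ with $0<m<n$ and suppose there is $\Delta>0$ such that $\|\mathbf h\|_1\ge\sqrt{m/\Delta}\,\|\mathbf h\|_2$ for all nonzero $\mathbf h\in\mathrm{Null}(\mathbf A)$. Fix $c>0$ and $\alpha>0$. If $$m\ge\Big(2+\frac{c}{\alpha}\Big)^2k\Delta,$$ then $\big(1+\frac{c}{\alpha}\big)\|\mathbf h_{\mathcal S}\|_1\le\|\mathbf h_{\mathcal S^c}\|_1$ holds for all $\mathbf h\in\mathrm{Null}(\mathbf A)$ and all coordinate sets $\mathcal S$ with $|\mathcal S|\le k$. Consequently, every $k$-sparse $\mathbf x^0$ with $\|\mathbf x^0\|_\infty=c$ is the unique minimizer of problem (P2) with $\mathbf b=\mathbf A\mathbf x^0$.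
   Context: Problem (P2) is $\min_{\mathbf x}\{\|\mathbf x\|_1+\frac{1}{2\alpha}\|\mathbf x\|_2^2:\ \mathbf A\mathbf x=\mathbf b\}$. A vector is $k$-sparse if it has at most $k$ nonzero entries. $\mathbf h_{\mathcal S}$ is the restriction of $\mathbf h$ to coordinates in $\mathcal S$, $\mathcal S^c$ its complement in $\{1,\dots,n\}$. *)

theory Defs
  imports "HOL-Analysis.Analysis"
begin

text \<open>Vectors in R^n are modelled as real^'n, m x n matrices as real^'n^'m;
  the Euclidean norm norm x is the l2 norm.\<close>

definition l1norm :: "real^'n \<Rightarrow> real" where
  "l1norm x = (\<Sum>i\<in>UNIV. \<bar>x $ i\<bar>)"

definition linfnorm :: "real^'n \<Rightarrow> real" where
  "linfnorm x = Max ((\<lambda>i. \<bar>x $ i\<bar>) ` UNIV)"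

definition restrict_vec :: "real^'n \<Rightarrow> 'n set \<Rightarrow> real^'n" where
  "restrict_vec h S = (\<chi> i. if i \<in> S then h $ i else 0)"

definition null_space :: "real^'n^'m \<Rightarrow> (real^'n) set" where
  "null_space A = {h. A *v h = 0}"

definition k_sparse :: "nat \<Rightarrow> real^'n \<Rightarrow> bool" where
  "k_sparse k x \<longleftrightarrow> card {i. x $ i \<noteq> 0} \<le> k"

definition P2_obj :: "real \<Rightarrow> real^'n \<Rightarrow> real" where
  "P2_obj \<alpha> x = l1norm x + (1 / (2 * \<alpha>)) * (norm x)\<^sup>2"

definition P2_unique_minimizer :: "real \<Rightarrow> real^'n^'m \<Rightarrow> real^'m \<Rightarrow> real^'n \<Rightarrow> bool" where
  "P2_unique_minimizer \<alpha> A b x \<longleftrightarrow>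
     A *v x = b \<and> (\<forall>y. A *v y = b \<and> y \<noteq> x \<longrightarrow> P2_obj \<alpha> x < P2_obj \<alpha> y)"

end

theory Submission
  imports Defs
begin

lemma l1_restrict: "l1norm (restrict_vec h S) = (\<Sum>i\<in>S. \<bar>h $ i\<bar>)"
proof -
  have "l1norm (restrict_vec h S) = (\<Sum>i\<in>UNIV. if i \<in> S then \<bar>h $ i\<bar> else 0)"
    unfolding l1norm_def restrict_vec_def by (intro sum.cong) auto
  also have "\<dots> = (\<Sum>i\<in>S. \<bar>h $ i\<bar>)"
    by (simp add: sum.If_cases)
  finally show ?thesis .
qed

lemma l1_split: "l1norm h = l1norm (restrict_vec h S) + l1norm (restrict_vec h (- S))"
proof -
  have "(\<Sum>i\<in>S \<union> - S. \<bar>h $ i\<bar>) = (\<Sum>i\<in>S. \<bar>h $ i\<bar>) + (\<Sum>i\<in>- S. \<bar>h $ i\<bar>)"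
    by (rule sum.union_disjoint) auto
  moreover have "l1norm h = (\<Sum>i\<in>S \<union> - S. \<bar>h $ i\<bar>)" by (simp add: l1norm_def)
  ultimately show ?thesis by (simp only: l1_restrict)
qed

lemma norm_sq: "(norm (h::real^'n))\<^sup>2 = (\<Sum>i\<in>UNIV. (h $ i)\<^sup>2)"
  unfolding power2_norm_eq_inner inner_vec_def by (simp add: power2_eq_square)

lemma l1_restrict_sq: "(l1norm (restrict_vec h S))\<^sup>2 \<le> real (card S) * (norm h)\<^sup>2"
proof -
  have "(l1norm (restrict_vec h S))\<^sup>2 = (\<Sum>i\<in>S. 1 * \<bar>h $ i\<bar>)\<^sup>2"
    by (simp add: l1_restrict)
  also have "\<dots> \<le> (\<Sum>i\<in>S. 1\<^sup>2) * (\<Sum>i\<in>S. \<bar>h $ i\<bar>\<^sup>2)"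
    by (rule Cauchy_Schwarz_ineq_sum)
  also have "\<dots> = real (card S) * (\<Sum>i\<in>S. (h $ i)\<^sup>2)" by simp
  also have "\<dots> \<le> real (card S) * (\<Sum>i\<in>UNIV. (h $ i)\<^sup>2)"
    by (intro mult_left_mono sum_mono2) auto
  finally show ?thesis by (simp add: norm_sq)
qed

lemma l1_nonneg: "l1norm h \<ge> 0"
  unfolding l1norm_def by (simp add: sum_nonneg)

theorem mainTheorem5:
  fixes A :: "real^'n^'m" and \<Delta> c \<alpha> :: real and k :: nat
  assumes mn: "CARD('m) < CARD('n)"
    and \<Delta>pos: "\<Delta> > 0"
    and nsp: "\<forall>h\<in>null_space A. h \<noteq> 0 \<longrightarrow>
               l1norm h \<ge> sqrt (real CARD('m) / \<Delta>) * norm h"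
    and cpos: "c > 0" and \<alpha>pos: "\<alpha> > 0"
    and mbound: "real CARD('m) \<ge> (2 + c / \<alpha>)\<^sup>2 * real k * \<Delta>"
  shows "(\<forall>h\<in>null_space A. \<forall>S :: 'n set. card S \<le> k \<longrightarrow>
            (1 + c / \<alpha>) * l1norm (restrict_vec h S) \<le> l1norm (restrict_vec h (- S)))
         \<and> (\<forall>x0 :: real^'n. k_sparse k x0 \<and> linfnorm x0 = c \<longrightarrow>
            P2_unique_minimizer \<alpha> A (A *v x0) x0)"
proof -
  define t where "t = 2 + c / \<alpha>"
  have cap: "c / \<alpha> > 0" using cpos \<alpha>pos by simp
  have tpos: "t > 0" using cap by (simp add: t_def)
  have P1: "(1 + c / \<alpha>) * l1norm (restrict_vec h S) \<le> l1norm (restrict_vec h (- S))"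
    if h: "h \<in> null_space A" and S: "card S \<le> k" for h and S :: "'n set"
  proof (cases "h = 0")
    case True
    then show ?thesis by (simp add: l1_restrict)
  next
    case False
    have a: "l1norm h \<ge> sqrt (real CARD('m) / \<Delta>) * norm h" using nsp h False by blast
    have b: "(l1norm h)\<^sup>2 \<ge> (real CARD('m) / \<Delta>) * (norm h)\<^sup>2"
    proof -
      have "(sqrt (real CARD('m) / \<Delta>) * norm h)\<^sup>2 \<le> (l1norm h)\<^sup>2"
        using a \<Delta>pos by (intro power_mono) auto
      thus ?thesis using \<Delta>pos by (simp add: power_mult_distrib)
    qed
    have c: "t\<^sup>2 * real k * \<Delta> \<le> real CARD('m)" using mbound by (simp add: t_def)
    have d: "t\<^sup>2 * real k \<le> real CARD('m) / \<Delta>" using c \<Delta>pos by (simp add: field_simps)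
    have "(t * l1norm (restrict_vec h S))\<^sup>2 = t\<^sup>2 * (l1norm (restrict_vec h S))\<^sup>2"
      by (simp add: power_mult_distrib)
    also have "\<dots> \<le> t\<^sup>2 * (real (card S) * (norm h)\<^sup>2)"
      by (intro mult_left_mono l1_restrict_sq) auto
    also have "\<dots> \<le> t\<^sup>2 * (real k * (norm h)\<^sup>2)"
      using S by (intro mult_left_mono mult_right_mono) auto
    also have "\<dots> = (t\<^sup>2 * real k) * (norm h)\<^sup>2" by simp
    also have "\<dots> \<le> (real CARD('m) / \<Delta>) * (norm h)\<^sup>2"
      using d by (intro mult_right_mono) auto
    also have "\<dots> \<le> (l1norm h)\<^sup>2" by (rule b)
    finally have "(t * l1norm (restrict_vec h S))\<^sup>2 \<le> (l1norm h)\<^sup>2" .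
    hence "t * l1norm (restrict_vec h S) \<le> l1norm h"
      using l1_nonneg[of h] by (rule power2_le_imp_le)
    thus ?thesis using l1_split[of h S] by (simp add: t_def algebra_simps)
  qed
  have P2: "P2_unique_minimizer \<alpha> A (A *v x0) x0"
    if sp: "k_sparse k x0" and inf: "linfnorm x0 = c" for x0 :: "real^'n"
  proof -
    define S where "S = {i. x0 $ i \<noteq> 0}"
    have cardS: "card S \<le> k" using sp by (simp add: k_sparse_def S_def)
    have bnd: "\<bar>x0 $ i\<bar> \<le> c" for i
    proof -
      have "\<bar>x0 $ i\<bar> \<le> Max ((\<lambda>i. \<bar>x0 $ i\<bar>) ` UNIV)"
        by (rule Max_ge) auto
      thus ?thesis using inf unfolding linfnorm_def by simp
    qed
    show ?thesis unfolding P2_unique_minimizer_def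
    proof (intro conjI allI impI)
      fix y assume y: "A *v y = A *v x0 \<and> y \<noteq> x0"
      define h where "h = y - x0"
      have hn: "h \<in> null_space A" using y by (simp add: h_def null_space_def matrix_vector_mult_diff_distrib)
      have h0: "h \<noteq> 0" using y by (simp add: h_def)
      have yh: "y = x0 + h" by (simp add: h_def)
      have key: "\<bar>x0 $ i + h $ i\<bar> + x0 $ i * h $ i / \<alpha> \<ge>
                 \<bar>x0 $ i\<bar> + (if i \<in> S then - (1 + c / \<alpha>) * \<bar>h $ i\<bar> else \<bar>h $ i\<bar>)" for i
      proof (cases "i \<in> S")
        case True
        have "x0 $ i * h $ i \<ge> - (c * \<bar>h $ i\<bar>)"
        proof -
          have "\<bar>x0 $ i * h $ i\<bar> \<le> c * \<bar>h $ i\<bar>"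
            using bnd[of i] by (simp add: abs_mult mult_right_mono)
          thus ?thesis by linarith
        qed
        hence "x0 $ i * h $ i / \<alpha> \<ge> - (c / \<alpha>) * \<bar>h $ i\<bar>"
          using \<alpha>pos by (simp add: field_simps)
        moreover have "\<bar>x0 $ i + h $ i\<bar> \<ge> \<bar>x0 $ i\<bar> - \<bar>h $ i\<bar>" by linarith
        ultimately show ?thesis using True by (simp add: algebra_simps)
      next
        case False
        then show ?thesis by (simp add: S_def)
      qed
      have sumkey: "l1norm y + (x0 \<bullet> h) / \<alpha> \<ge>
            l1norm x0 + (l1norm (restrict_vec h (- S)) - (1 + c / \<alpha>) * l1norm (restrict_vec h S))"
      proof -
        have "l1norm y + (x0 \<bullet> h) / \<alpha> = (\<Sum>i\<in>UNIV. \<bar>x0 $ i + h $ i\<bar> + x0 $ i * h $ i / \<alpha>)"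
        proof -
          have e1: "l1norm y = (\<Sum>i\<in>UNIV. \<bar>x0 $ i + h $ i\<bar>)" by (simp add: yh l1norm_def)
          have e2: "x0 \<bullet> h = (\<Sum>i\<in>UNIV. x0 $ i * h $ i)" unfolding inner_vec_def by simp
          show ?thesis unfolding e1 e2 sum_divide_distrib sum.distrib[symmetric] by simp
        qed
        also have "\<dots> \<ge> (\<Sum>i\<in>UNIV. \<bar>x0 $ i\<bar> + (if i \<in> S then - (1 + c / \<alpha>) * \<bar>h $ i\<bar> else \<bar>h $ i\<bar>))"
          by (intro sum_mono key)
        moreover have "(\<Sum>i\<in>UNIV. \<bar>x0 $ i\<bar> + (if i \<in> S then - (1 + c / \<alpha>) * \<bar>h $ i\<bar> else \<bar>h $ i\<bar>))
            = l1norm x0 + (l1norm (restrict_vec h (- S)) - (1 + c / \<alpha>) * l1norm (restrict_vec h S))"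
        proof -
          have "(\<Sum>i\<in>UNIV. (if i \<in> S then - (1 + c / \<alpha>) * \<bar>h $ i\<bar> else \<bar>h $ i\<bar>))
             = (\<Sum>i\<in>S. - (1 + c / \<alpha>) * \<bar>h $ i\<bar>) + (\<Sum>i\<in>- S. \<bar>h $ i\<bar>)"
            by (simp add: sum.If_cases Compl_eq_Diff_UNIV)
          also have "\<dots> = l1norm (restrict_vec h (- S)) - (1 + c / \<alpha>) * l1norm (restrict_vec h S)"
            unfolding l1_restrict sum_distrib_left[symmetric] by (simp add: algebra_simps)
          finally show ?thesis unfolding sum.distrib l1norm_def by simp
        qed
        ultimately show ?thesis by linarith
      qed
      have nrm: "(norm y)\<^sup>2 = (norm x0)\<^sup>2 + 2 * (x0 \<bullet> h) + (norm h)\<^sup>2"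
        by (simp add: yh power2_norm_eq_inner inner_add_left inner_add_right inner_commute)
      have hpos: "(norm h)\<^sup>2 > 0" using h0 by simp
      have p1: "(1 + c / \<alpha>) * l1norm (restrict_vec h S) \<le> l1norm (restrict_vec h (- S))"
        using P1 hn cardS by blast
      have "P2_obj \<alpha> y = l1norm y + (x0 \<bullet> h) / \<alpha> + (norm x0)\<^sup>2 / (2*\<alpha>) + (norm h)\<^sup>2 / (2*\<alpha>)"
        unfolding P2_obj_def nrm using \<alpha>pos by (simp add: field_simps)
      moreover have "(norm h)\<^sup>2 / (2*\<alpha>) > 0" using hpos \<alpha>pos by simp
      moreover have "P2_obj \<alpha> x0 = l1norm x0 + (norm x0)\<^sup>2 / (2*\<alpha>)"
        unfolding P2_obj_def by simp
      ultimately show "P2_obj \<alpha> x0 < P2_obj \<alpha> y" using sumkey p1 by linarith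
    qed simp
  qed
  show ?thesis using P1 P2 by blast
qed

end
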